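(* Fix integers $k \ge 2$ and $1 \le t \le k$. Let $X$ be a set of $n$ elements carrying a fixed but unknown total order, and suppose we have a $(k,t)$ scale, which on input any $k$-element subset of $X$ returns the $t$-th smallest element of that subset. Let $S$ be the set of the $t-1$ smallest elements of $X$ and $L$ the set of the $k-t$ largest elements of $X$. Then there is an adaptive (on-line) procedure, using $O(n \log n)$ queries (for fixed $k$ and $t$, as $n \to \infty$), which identifies the set $S \cup L$ and determines the relative order of all elements of $X \setminus (S \cup L)$; if the scale is symmetric, i.e. $t = (k+1)/2$, the order is determined up to reversal.
   Context: A query consists of submitting a $k$-element subset of $X$ to the scale and receiving its output. In the on-line setting each query may be chosen depending on the results of previous queries. The ordering of the elements of $S$ and of $L$ can never be determined, since these elements are never returned by any query. *)

theory Defs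
  imports Complex_Main
begin

text \<open>Ground set X = {..<n}. The fixed but unknown total order on X is given by a
rank bijection r : X -> {..<n}; x precedes y iff r x < r y.\<close>

definition scale :: "nat \<Rightarrow> (nat \<Rightarrow> nat) \<Rightarrow> nat set \<Rightarrow> nat" where
  "scale t r Q = (THE x. x \<in> Q \<and> card {y \<in> Q. r y < r x} = t - 1)"

text \<open>Adaptive (on-line) query procedures as decision trees: a node submits a set
to the scale and branches on the returned element; a leaf outputs a set
(claimed to be S \<union> L) and a list (the claimed order of the remaining elements).\<close>
datatype qtree = Leaf "nat set \<times> nat list" | Query "nat set" "nat \<Rightarrow> qtree"

primrec result :: "nat \<Rightarrow> qtree \<Rightarrow> (nat \<Rightarrow> nat) \<Rightarrow> nat set \<times> nat list" where
  "result t (Leaf o') r = o'"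
| "result t (Query Q f) r = result t (f (scale t r Q)) r"

primrec cost :: "nat \<Rightarrow> qtree \<Rightarrow> (nat \<Rightarrow> nat) \<Rightarrow> nat" where
  "cost t (Leaf o') r = 0"
| "cost t (Query Q f) r = Suc (cost t (f (scale t r Q)) r)"

primrec valid_run :: "nat \<Rightarrow> nat \<Rightarrow> nat \<Rightarrow> qtree \<Rightarrow> (nat \<Rightarrow> nat) \<Rightarrow> bool" where
  "valid_run k t n (Leaf o') r = True"
| "valid_run k t n (Query Q f) r =
     (Q \<subseteq> {..<n} \<and> card Q = k \<and> valid_run k t n (f (scale t r Q)) r)"

definition smallS :: "nat \<Rightarrow> nat \<Rightarrow> (nat \<Rightarrow> nat) \<Rightarrow> nat set" where
  "smallS t n r = {x \<in> {..<n}. r x < t - 1}"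

definition largeL :: "nat \<Rightarrow> nat \<Rightarrow> nat \<Rightarrow> (nat \<Rightarrow> nat) \<Rightarrow> nat set" where
  "largeL k t n r = {x \<in> {..<n}. n - (k - t) \<le> r x}"

definition correct_output ::
  "nat \<Rightarrow> nat \<Rightarrow> nat \<Rightarrow> (nat \<Rightarrow> nat) \<Rightarrow> nat set \<times> nat list \<Rightarrow> bool" where
  "correct_output k t n r out =
     (fst out = smallS t n r \<union> largeL k t n r \<and>
      set (snd out) = {..<n} - (smallS t n r \<union> largeL k t n r) \<and>
      (sorted_wrt (\<lambda>x y. r x < r y) (snd out) \<or>
       (2 * t = k + 1 \<and> sorted_wrt (\<lambda>x y. r y < r x) (snd out))))"

end

theory Submission
  imports Defs "HOL-Library.Multiset"
begin


datatype 'a comp = Ret 'a | Ask "nat set" "nat \<Rightarrow> 'a comp"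

primrec cbind :: "'a comp \<Rightarrow> ('a \<Rightarrow> 'b comp) \<Rightarrow> 'b comp" where
  "cbind (Ret a) f = f a"
| "cbind (Ask Q g) f = Ask Q (\<lambda>q. cbind (g q) f)"

primrec run :: "nat \<Rightarrow> (nat \<Rightarrow> nat) \<Rightarrow> 'a comp \<Rightarrow> 'a" where
  "run t r (Ret a) = a"
| "run t r (Ask Q g) = run t r (g (scale t r Q))"

primrec cst :: "nat \<Rightarrow> (nat \<Rightarrow> nat) \<Rightarrow> 'a comp \<Rightarrow> nat" where
  "cst t r (Ret a) = 0"
| "cst t r (Ask Q g) = Suc (cst t r (g (scale t r Q)))"

primrec vld :: "nat \<Rightarrow> nat \<Rightarrow> nat \<Rightarrow> (nat \<Rightarrow> nat) \<Rightarrow> 'a comp \<Rightarrow> bool" where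
  "vld k t n r (Ret a) = True"
| "vld k t n r (Ask Q g) = (Q \<subseteq> {..<n} \<and> card Q = k \<and> vld k t n r (g (scale t r Q)))"

primrec toq :: "(nat set \<times> nat list) comp \<Rightarrow> qtree" where
  "toq (Ret a) = Leaf a"
| "toq (Ask Q g) = Query Q (\<lambda>q. toq (g q))"

lemma toq_result: "result t (toq m) r = run t r m" by (induction m) auto
lemma toq_cost: "cost t (toq m) r = cst t r m" by (induction m) auto
lemma toq_valid: "valid_run k t n (toq m) r = vld k t n r m" by (induction m) auto

lemma run_bind[simp]: "run t r (cbind m f) = run t r (f (run t r m))" by (induction m) auto
lemma cst_bind[simp]: "cst t r (cbind m f) = cst t r m + cst t r (f (run t r m))" by (induction m) auto
lemma vld_bind[simp]: "vld k t n r (cbind m f) = (vld k t n r m \<and> vld k t n r (f (run t r m)))"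
  by (induction m) auto

fun mmerge :: "(nat \<Rightarrow> nat \<Rightarrow> nat set) \<Rightarrow> nat list \<Rightarrow> nat list \<Rightarrow> nat list comp" where
  "mmerge Qf [] ys = Ret ys"
| "mmerge Qf xs [] = Ret xs"
| "mmerge Qf (x#xs) (y#ys) = Ask (Qf x y) (\<lambda>q. if q = x
      then cbind (mmerge Qf xs (y#ys)) (\<lambda>zs. Ret (x#zs))
      else cbind (mmerge Qf (x#xs) ys) (\<lambda>zs. Ret (y#zs)))"

fun msort :: "(nat \<Rightarrow> nat \<Rightarrow> nat set) \<Rightarrow> nat list \<Rightarrow> nat list comp" where
  "msort Qf xs = (if length xs \<le> 1 then Ret xs else
     (let a = msort Qf (take (length xs div 2) xs); b = msort Qf (drop (length xs div 2) xs)
      in cbind a (\<lambda>a'. cbind b (\<lambda>b'. mmerge Qf a' b'))))"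

declare msort.simps[simp del]

lemma mmerge_props:
  fixes key :: "nat \<Rightarrow> int"
  assumes inj: "inj_on key A"
  shows "(\<And>x y. x \<in> A \<Longrightarrow> y \<in> A \<Longrightarrow> x \<noteq> y \<Longrightarrow>
      Qf x y \<subseteq> {..<n} \<and> card (Qf x y) = k \<and> (scale t r (Qf x y) = x \<longleftrightarrow> key x < key y)) \<Longrightarrow>
   set xs \<subseteq> A \<Longrightarrow> set ys \<subseteq> A \<Longrightarrow> set xs \<inter> set ys = {} \<Longrightarrow>
     sorted_wrt (\<lambda>x y. key x < key y) xs \<Longrightarrow> sorted_wrt (\<lambda>x y. key x < key y) ys \<Longrightarrow>
     mset (run t r (mmerge Qf xs ys)) = mset xs + mset ys \<and>
     sorted_wrt (\<lambda>x y. key x < key y) (run t r (mmerge Qf xs ys)) \<and>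
     cst t r (mmerge Qf xs ys) \<le> length xs + length ys \<and> vld k t n r (mmerge Qf xs ys)"
proof (induction Qf xs ys rule: mmerge.induct)
  case (1 Qf ys) then show ?case by simp
next
  case (2 Qf v va) then show ?case by simp
next
  case (3 Qf x xs y ys)
  have xy: "x \<noteq> y" "x \<in> A" "y \<in> A" using 3(4-6) by auto
  have kne: "key x \<noteq> key y" using inj xy by (meson inj_onD)
  have H3: "Qf x y \<subseteq> {..<n} \<and> card (Qf x y) = k \<and> (scale t r (Qf x y) = x \<longleftrightarrow> key x < key y)"
    by (rule 3(3)[OF xy(2,3,1)])
  note Hxy = H3[THEN conjunct1] H3[THEN conjunct2, THEN conjunct1] H3[THEN conjunct2, THEN conjunct2]
  show ?case
  proof (cases "key x < key y")
    case True
    have q: "scale t r (Qf x y) = x" using Hxy(3) True by simp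
    have IH: "mset (run t r (mmerge Qf xs (y#ys))) = mset xs + mset (y#ys) \<and>
     sorted_wrt (\<lambda>x y. key x < key y) (run t r (mmerge Qf xs (y#ys))) \<and>
     cst t r (mmerge Qf xs (y#ys)) \<le> length xs + length (y#ys) \<and> vld k t n r (mmerge Qf xs (y#ys))"
      apply (rule 3(1)[OF q]) using 3(3-8) by auto
    have st: "set (run t r (mmerge Qf xs (y#ys))) = set xs \<union> set (y#ys)"
      using arg_cong[OF IH[THEN conjunct1], of set_mset] by simp
    have "\<forall>z \<in> set (run t r (mmerge Qf xs (y#ys))). key x < key z"
      using st 3(7,8) True by auto
    then show ?thesis using IH q Hxy by simp
  next
    case False
    then have F: "key y < key x" using kne by auto
    have q: "scale t r (Qf x y) \<noteq> x" using Hxy(3) False by simp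
    have IH: "mset (run t r (mmerge Qf (x#xs) ys)) = mset (x#xs) + mset ys \<and>
     sorted_wrt (\<lambda>x y. key x < key y) (run t r (mmerge Qf (x#xs) ys)) \<and>
     cst t r (mmerge Qf (x#xs) ys) \<le> length (x#xs) + length ys \<and> vld k t n r (mmerge Qf (x#xs) ys)"
      apply (rule 3(2)[OF q]) using 3(3-8) by auto
    have st: "set (run t r (mmerge Qf (x#xs) ys)) = set (x#xs) \<union> set ys"
      using arg_cong[OF IH[THEN conjunct1], of set_mset] by simp
    have "\<forall>z \<in> set (run t r (mmerge Qf (x#xs) ys)). key y < key z"
      using st 3(7,8) F by auto
    then show ?thesis using IH q Hxy by simp
  qed
qed




lemma aux_arith: "(a::nat)*L + b*L + (a+b) = (a+b)*Suc L" by (simp add: algebra_simps)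

lemma sorted_short: "length xs \<le> 1 \<Longrightarrow> sorted_wrt R xs"
  by (cases xs) auto

lemma msort_props:
  fixes key :: "nat \<Rightarrow> int"
  assumes inj: "inj_on key A"
  shows "(\<And>x y. x \<in> A \<Longrightarrow> y \<in> A \<Longrightarrow> x \<noteq> y \<Longrightarrow>
      Qf x y \<subseteq> {..<n} \<and> card (Qf x y) = k \<and> (scale t r (Qf x y) = x \<longleftrightarrow> key x < key y)) \<Longrightarrow>
   set xs \<subseteq> A \<Longrightarrow> distinct xs \<Longrightarrow>
     mset (run t r (msort Qf xs)) = mset xs \<and>
     sorted_wrt (\<lambda>x y. key x < key y) (run t r (msort Qf xs)) \<and>
     vld k t n r (msort Qf xs) \<and>
     (\<forall>L. length xs \<le> 2 ^ L \<longrightarrow> cst t r (msort Qf xs) \<le> length xs * L)"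
proof (induction Qf xs rule: msort.induct)
  case (1 Qf xs)
  show ?case
  proof (cases "length xs \<le> 1")
    case True
    then show ?thesis by (subst (1 2 3 4) msort.simps) (simp add: sorted_short)
  next
    case False
    define h where "h = length xs div 2"
    define a where "a = msort Qf (take h xs)"
    define b where "b = msort Qf (drop h xs)"
    have eq: "msort Qf xs = cbind a (\<lambda>a'. cbind b (\<lambda>b'. mmerge Qf a' b'))"
      using False unfolding a_def b_def h_def by (subst msort.simps) (simp add: Let_def)
    have IA: "mset (run t r a) = mset (take h xs) \<and>
     sorted_wrt (\<lambda>x y. key x < key y) (run t r a) \<and> vld k t n r a \<and>
     (\<forall>L. length (take h xs) \<le> 2 ^ L \<longrightarrow> cst t r a \<le> length (take h xs) * L)"
      unfolding a_def h_def
      apply (rule 1(1)[OF False 1(3)])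
      using 1(4,5) set_take_subset[of "length xs div 2" xs] by auto
    have IB: "mset (run t r b) = mset (drop h xs) \<and>
     sorted_wrt (\<lambda>x y. key x < key y) (run t r b) \<and> vld k t n r b \<and>
     (\<forall>L. length (drop h xs) \<le> 2 ^ L \<longrightarrow> cst t r b \<le> length (drop h xs) * L)"
      unfolding b_def h_def
      apply (rule 1(2)[OF False refl 1(3)])
      using 1(4,5) set_drop_subset[of "length xs div 2" xs] by auto
    have sa: "set (run t r a) = set (take h xs)"
      using arg_cong[OF IA[THEN conjunct1], of set_mset] by simp
    have sb: "set (run t r b) = set (drop h xs)"
      using arg_cong[OF IB[THEN conjunct1], of set_mset] by simp
    have la: "length (run t r a) = length (take h xs)"
      using arg_cong[OF IA[THEN conjunct1], of size] by simp
    have lb: "length (run t r b) = length (drop h xs)"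
      using arg_cong[OF IB[THEN conjunct1], of size] by simp
    have disj: "set (take h xs) \<inter> set (drop h xs) = {}"
      using 1(5) set_take_disj_set_drop_if_distinct by blast
    have M: "mset (run t r (mmerge Qf (run t r a) (run t r b))) = mset (run t r a) + mset (run t r b) \<and>
     sorted_wrt (\<lambda>x y. key x < key y) (run t r (mmerge Qf (run t r a) (run t r b))) \<and>
     cst t r (mmerge Qf (run t r a) (run t r b)) \<le> length (run t r a) + length (run t r b) \<and>
     vld k t n r (mmerge Qf (run t r a) (run t r b))"
      apply (rule mmerge_props[OF inj 1(3)])
      using sa sb disj 1(4) IA IB set_take_subset[of h xs] set_drop_subset[of h xs] by auto
    have ms: "mset (run t r (msort Qf xs)) = mset xs"
      using M IA IB eq by (simp add: append_take_drop_id flip: mset_append)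
    have cost: "length xs \<le> 2 ^ L \<Longrightarrow> cst t r (msort Qf xs) \<le> length xs * L" for L
    proof -
      assume len: "length xs \<le> 2 ^ L"
      have "L \<noteq> 0" using len False by (cases L) auto
      then obtain L' where L': "L = Suc L'" by (cases L) auto
      have h1: "length (take h xs) \<le> 2 ^ L'" using len L' unfolding h_def by auto
      have h2: "length (drop h xs) \<le> 2 ^ L'" using len L' unfolding h_def by auto
      have "cst t r (msort Qf xs) = cst t r a + cst t r b + cst t r (mmerge Qf (run t r a) (run t r b))"
        using eq by simp
      also have "\<dots> \<le> length (take h xs) * L' + length (drop h xs) * L' + (length (take h xs) + length (drop h xs))"
        using IA IB M h1 h2 la lb by (intro add_mono) auto
      also have "\<dots> = length xs * L"
      proof -
        have "length (take h xs) + length (drop h xs) = length xs" by simp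
        moreover have "length (take h xs) * L' + length (drop h xs) * L' + (length (take h xs) + length (drop h xs))
           = (length (take h xs) + length (drop h xs)) * Suc L'" by (rule aux_arith)
        ultimately show ?thesis using L' by simp
      qed
      finally show ?thesis .
    qed
    show ?thesis using ms M IA IB eq cost by simp
  qed
qed




lemma rank_less_card:
  fixes r :: "nat \<Rightarrow> nat"
  assumes "finite Q" "x \<in> Q"
  shows "card {y\<in>Q. r y < r x} < card Q"
proof (rule psubset_card_mono[OF assms(1)])
  show "{y\<in>Q. r y < r x} \<subset> Q" using assms(2) by blast
qed

lemma rank_inj:
  fixes r :: "nat \<Rightarrow> nat"
  assumes "finite Q" "inj_on r Q"
  shows "inj_on (\<lambda>x. card {y\<in>Q. r y < (r x::nat)}) Q"
proof (rule inj_onI)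
  fix x x' assume xq: "x \<in> Q" "x' \<in> Q" and eq: "card {y\<in>Q. r y < r x} = card {y\<in>Q. r y < r x'}"
  show "x = x'"
  proof (rule ccontr)
    assume ne: "x \<noteq> x'"
    then have "r x \<noteq> r x'" using assms(2) xq by (meson inj_onD)
    then consider "r x < r x'" | "r x' < r x" by linarith
    then show False
    proof cases
      case 1
      have "{y\<in>Q. r y < r x} \<subset> {y\<in>Q. r y < r x'}" using 1 xq by auto
      then have "card {y\<in>Q. r y < r x} < card {y\<in>Q. r y < r x'}"
        by (rule psubset_card_mono[rotated]) (use assms(1) in simp)
      then show False using eq by simp
    next
      case 2
      have "{y\<in>Q. r y < r x'} \<subset> {y\<in>Q. r y < r x}" using 2 xq by auto
      then have "card {y\<in>Q. r y < r x'} < card {y\<in>Q. r y < r x}"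
        by (rule psubset_card_mono[rotated]) (use assms(1) in simp)
      then show False using eq by simp
    qed
  qed
qed

lemma rank_ex:
  fixes r :: "nat \<Rightarrow> nat"
  assumes "finite Q" "inj_on r Q" "i < card Q"
  shows "\<exists>x\<in>Q. card {y\<in>Q. r y < (r x::nat)} = i"
proof -
  let ?f = "\<lambda>x. card {y\<in>Q. r y < (r x::nat)}"
  have "?f ` Q \<subseteq> {..<card Q}" using rank_less_card[OF assms(1)] by auto
  moreover have "card (?f ` Q) = card {..<card Q}"
    using card_image[OF rank_inj[OF assms(1,2)]] by simp
  ultimately have "?f ` Q = {..<card Q}" by (intro card_subset_eq) simp_all
  then have "i \<in> ?f ` Q" using assms(3) by simp
  then show ?thesis by (rule imageE) blast
qed

lemma scale_spec:
  fixes r :: "nat \<Rightarrow> nat"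
  assumes "finite Q" "inj_on r Q" "t - 1 < card Q"
  shows "scale t r Q \<in> Q \<and> card {y\<in>Q. r y < r (scale t r Q)} = t - 1"
proof -
  have "\<exists>!x. x \<in> Q \<and> card {y\<in>Q. r y < r x} = t - 1"
  proof -
    obtain x where "x \<in> Q" "card {y\<in>Q. r y < r x} = t - 1" using rank_ex[OF assms] by blast
    moreover have "\<And>x'. x' \<in> Q \<and> card {y\<in>Q. r y < r x'} = t - 1 \<Longrightarrow> x' = x"
    proof -
      fix x' assume "x' \<in> Q \<and> card {y\<in>Q. r y < r x'} = t - 1"
      then show "x' = x" using calculation inj_onD[OF rank_inj[OF assms(1,2)], of x' x] by auto
    qed
    ultimately show ?thesis by blast
  qed
  then show ?thesis unfolding scale_def by (rule theI')
qed

lemma scale_char: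
  fixes r :: "nat \<Rightarrow> nat"
  assumes "finite Q" "inj_on r Q" "x \<in> Q" "card {y\<in>Q. r y < r x} = t - 1"
  shows "scale t r Q = x"
proof -
  have "t - 1 < card Q" using rank_less_card[OF assms(1,3), of r] assms(4) by simp
  from scale_spec[OF assms(1,2) this]
  have s: "scale t r Q \<in> Q" "card {y\<in>Q. r y < r (scale t r Q)} = card {y\<in>Q. r y < r x}"
    using assms(4) by auto
  show ?thesis using inj_onD[OF rank_inj[OF assms(1,2)] s(2) s(1) assms(3)] .
qed

lemma sorted_rank:
  fixes r :: "nat \<Rightarrow> nat"
  assumes "sorted_wrt (\<lambda>x y. r x < (r y::nat)) ys" "i < length ys"
  shows "{y \<in> set ys. r y < r (ys ! i)} = set (take i ys)"
proof -
  have d: "ys = take i ys @ (ys ! i # drop (Suc i) ys)"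
    using assms(2) by (simp add: Cons_nth_drop_Suc)
  have s: "sorted_wrt (\<lambda>x y. r x < (r y::nat)) (take i ys @ (ys ! i # drop (Suc i) ys))"
    by (subst d[symmetric]) (rule assms(1))
  have A: "\<forall>y\<in>set (take i ys). r y < r (ys ! i)"
    using s unfolding sorted_wrt_append by simp
  have B: "\<forall>y\<in>set (drop (Suc i) ys). r (ys ! i) < r y"
    using s unfolding sorted_wrt_append by simp
  have "set ys = set (take i ys @ (ys ! i # drop (Suc i) ys))" using arg_cong[where f=set, OF d] .
  also have "\<dots> = set (take i ys) \<union> insert (ys ! i) (set (drop (Suc i) ys))"
    by simp
  finally have E: "set ys = set (take i ys) \<union> insert (ys ! i) (set (drop (Suc i) ys))" .
  show ?thesis
  proof (rule set_eqI)
    fix y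
    show "y \<in> {y \<in> set ys. r y < r (ys ! i)} \<longleftrightarrow> y \<in> set (take i ys)"
    proof
      assume "y \<in> {y \<in> set ys. r y < r (ys ! i)}"
      then have "y \<in> set ys" "r y < r (ys ! i)" by auto
      then have "y \<in> set (take i ys) \<or> y = ys ! i \<or> y \<in> set (drop (Suc i) ys)" using E by auto
      moreover have "y \<noteq> ys ! i" using \<open>r y < r (ys ! i)\<close> by auto
      moreover have "y \<notin> set (drop (Suc i) ys)" using B \<open>r y < r (ys ! i)\<close> by force
      ultimately show "y \<in> set (take i ys)" by blast
    next
      assume y: "y \<in> set (take i ys)"
      then have "y \<in> set ys" using E by simp
      moreover have "r y < r (ys ! i)" using A y by simp
      ultimately show "y \<in> {y \<in> set ys. r y < r (ys ! i)}" by simp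
    qed
  qed
qed




primrec tour :: "nat set \<Rightarrow> nat list \<Rightarrow> nat set comp" where
  "tour C [] = Ret C"
| "tour C (x # xs) = Ask (insert x C) (\<lambda>q. tour (insert x C - {q}) xs)"

locale sett =
  fixes k t n :: nat and r :: "nat \<Rightarrow> nat"
  assumes k2: "2 \<le> k" and t1: "1 \<le> t" and tk: "t \<le> k"
    and bij: "bij_betw r {..<n} {..<n}" and nbig: "2*k + 3 \<le> n"
begin

abbreviation "SS \<equiv> smallS t n r"
abbreviation "LL \<equiv> largeL k t n r"
abbreviation "UU \<equiv> SS \<union> LL"
abbreviation "MM \<equiv> {..<n} - UU"

lemma inj: "inj_on r {..<n}" using bij by (simp add: bij_betw_def)
lemma img: "r ` {..<n} = {..<n}" using bij by (simp add: bij_betw_def)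
lemma rlt: "x < n \<Longrightarrow> r x < n" using img by auto
lemma injQ: "Q \<subseteq> {..<n} \<Longrightarrow> inj_on r Q" using inj inj_on_subset by blast

lemma card_pre: "card {x\<in>{..<n}. P (r x)} = card {i\<in>{..<n}. P i}"
proof -
  have "{i\<in>{..<n}. P i} = {i \<in> r ` {..<n}. P i}" using img by simp
  also have "\<dots> = r ` {x\<in>{..<n}. P (r x)}" by auto
  finally have "r ` {x\<in>{..<n}. P (r x)} = {i\<in>{..<n}. P i}" by simp
  moreover have "inj_on r {x\<in>{..<n}. P (r x)}" by (rule injQ) auto
  ultimately show ?thesis by (metis card_image)
qed

lemma cardS: "card SS = t - 1"
proof -
  have "card SS = card {i\<in>{..<n}. i < t - 1}" unfolding smallS_def by (rule card_pre)
  also have "{i\<in>{..<n}. i < t - 1} = {..<t-1}" using nbig tk by auto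
  finally show ?thesis by simp
qed

lemma cardL: "card LL = k - t"
proof -
  have "card LL = card {i\<in>{..<n}. n - (k - t) \<le> i}" unfolding largeL_def by (rule card_pre)
  also have "{i\<in>{..<n}. n - (k - t) \<le> i} = {n - (k - t)..<n}" by auto
  finally show ?thesis using nbig by simp
qed

lemma memS: "x \<in> SS \<longleftrightarrow> x < n \<and> r x < t - 1" by (simp add: smallS_def)
lemma memL: "x \<in> LL \<longleftrightarrow> x < n \<and> n - (k - t) \<le> r x" by (simp add: largeL_def)

lemma disjSL: "SS \<inter> LL = {}" using nbig tk by (auto simp: memS memL)

lemma finU: "finite UU" by (auto simp: smallS_def largeL_def)
lemma Usub: "UU \<subseteq> {..<n}" by (auto simp: smallS_def largeL_def)
lemma cardU: "card UU = k - 1"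
  using card_Un_disjoint[of SS LL] disjSL cardS cardL t1 tk by (simp add: smallS_def largeL_def)

lemma memM: "x \<in> MM \<longleftrightarrow> x < n \<and> t - 1 \<le> r x \<and> r x < n - (k - t)"
  by (auto simp: memS memL)

lemma cardM: "card MM = n - (k - 1)"
  using card_Diff_subset[OF finU Usub] cardU by simp

lemma ret_notU:
  assumes Q: "Q \<subseteq> {..<n}" "card Q = k"
  shows "scale t r Q \<in> Q \<and> scale t r Q \<notin> UU"
proof -
  have fin: "finite Q" using Q(1) finite_subset by blast
  have iQ: "inj_on r Q" using injQ[OF Q(1)] .
  let ?q = "scale t r Q"
  have sp: "?q \<in> Q \<and> card {y\<in>Q. r y < r ?q} = t - 1"
    by (rule scale_spec[OF fin iQ]) (use Q k2 t1 tk in simp)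
  define B where "B = {y\<in>Q. r y < r ?q}"
  have cB: "card B = t - 1" using sp B_def by simp
  have rq: "r ?q < n" using sp Q rlt by auto
  have "card (r ` B) = card B" by (rule card_image) (use iQ B_def in \<open>auto intro: inj_on_subset\<close>)
  moreover have "r ` B \<subseteq> {..<r ?q}" unfolding B_def by auto
  ultimately have "card B \<le> r ?q" by (metis card_lessThan card_mono finite_lessThan)
  then have nS: "?q \<notin> SS" using cB by (simp add: memS)
  define A where "A = {y\<in>Q. r ?q < r y}"
  have AQ: "A = Q - insert ?q B" unfolding A_def B_def using iQ sp
    by (auto simp: inj_on_eq_iff) (metis linorder_neqE_nat inj_onD)
  have "card (insert ?q B) = t" using cB t1 fin unfolding B_def by (simp add: card_insert_if)
  then have cA: "card A = k - t" unfolding AQ using sp Q fin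
    by (subst card_Diff_subset) (auto simp: B_def)
  have "card (r ` A) = card A" by (rule card_image) (use iQ A_def in \<open>auto intro: inj_on_subset\<close>)
  moreover have "r ` A \<subseteq> {r ?q<..<n}" unfolding A_def using Q rlt by auto
  ultimately have "card A \<le> n - Suc (r ?q)" by (metis card_greaterThanLessThan card_mono finite_greaterThanLessThan)
  then have "r ?q < n - (k - t)" using cA rq by linarith
  then have nL: "?q \<notin> LL" by (simp add: memL)
  show ?thesis using sp nS nL by blast
qed

lemma tour_ok:
  "j \<le> n \<Longrightarrow> C \<subseteq> {..<j} \<Longrightarrow> card C = k - 1 \<Longrightarrow> UU \<inter> {..<j} \<subseteq> C \<Longrightarrow>
   run t r (tour C [j..<n]) = UU \<and> cst t r (tour C [j..<n]) = n - j \<and> vld k t n r (tour C [j..<n])"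
proof (induction "n - j" arbitrary: j C)
  case 0
  then have jn: "j = n" by simp
  have "UU \<subseteq> C" using 0 Usub jn by auto
  moreover have "finite C" using 0 finite_subset by blast
  ultimately have "UU = C" using cardU 0 by (metis card_subset_eq)
  then show ?case using jn by simp
next
  case (Suc d)
  then have jn: "j < n" using Suc.hyps(2) by simp
  have up: "[j..<n] = j # [Suc j..<n]" using jn by (simp add: upt_conv_Cons)
  define Q where "Q = insert j C"
  have jC: "j \<notin> C" using Suc.prems by auto
  have fC: "finite C" using Suc.prems finite_subset by blast
  have Qn: "Q \<subseteq> {..<n}" using Suc.prems jn Q_def by auto
  have cQ: "card Q = k" using jC fC Suc k2 Q_def by simp
  define q where "q = scale t r Q"
  have q: "q \<in> Q" "q \<notin> UU" using ret_notU[OF Qn cQ] q_def by auto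
  have IH: "run t r (tour (Q - {q}) [Suc j..<n]) = UU \<and> cst t r (tour (Q - {q}) [Suc j..<n]) = n - Suc j
      \<and> vld k t n r (tour (Q - {q}) [Suc j..<n])"
  proof (rule Suc.hyps(1))
    show "d = n - Suc j" using Suc.hyps(2) by simp
    show "Suc j \<le> n" using jn by simp
    show "Q - {q} \<subseteq> {..<Suc j}" using Suc.prems Q_def by auto
    show "card (Q - {q}) = k - 1" using q cQ fC Q_def by simp
    show "UU \<inter> {..<Suc j} \<subseteq> Q - {q}" using Suc.prems q Q_def by (auto simp: less_Suc_eq)
  qed
  show ?case unfolding up using IH Qn cQ jn by (simp add: Q_def[symmetric] q_def[symmetric])
qed

end



context sett begin

lemma cmp_lt:
  assumes a: "a \<in> MM" and b: "b \<in> MM" and ab: "r a < r b" and c0: "c0 \<in> UU"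
  defines "Q \<equiv> (UU - {c0}) \<union> {a, b}"
  shows "(c0 \<in> LL \<longrightarrow> scale t r Q = a) \<and> (c0 \<in> SS \<longrightarrow> scale t r Q = b)"
proof -
  have Qn: "Q \<subseteq> {..<n}" using Usub a b unfolding Q_def by auto
  have fQ: "finite Q" using Qn finite_subset by blast
  have iQ: "inj_on r Q" using injQ[OF Qn] .
  have am: "a < n" "t - 1 \<le> r a" "r a < n - (k - t)" using memM[THEN iffD1, OF a] by auto
  have bm: "b < n" "t - 1 \<le> r b" "r b < n - (k - t)" using memM[THEN iffD1, OF b] by auto
  have L1: "c0 \<in> LL \<longrightarrow> scale t r Q = a"
  proof
    assume cL: "c0 \<in> LL"
    then have cS: "c0 \<notin> SS" using disjSL by blast
    have "{z\<in>Q. r z < r a} = SS"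
    proof (rule set_eqI)
      fix z
      show "z \<in> {z\<in>Q. r z < r a} \<longleftrightarrow> z \<in> SS"
      proof
        assume "z \<in> {z\<in>Q. r z < r a}"
        then have zQ: "z \<in> Q" and zr: "r z < r a" by auto
        have "z \<noteq> a" "z \<noteq> b" using zr ab by auto
        then have "z \<in> UU" using zQ unfolding Q_def by auto
        moreover have "z \<notin> LL" using zr am by (auto simp: memL)
        ultimately show "z \<in> SS" by blast
      next
        assume zS: "z \<in> SS"
        then have "z \<in> Q" using cS unfolding Q_def by auto
        moreover have "r z < r a" using zS am by (auto simp: memS)
        ultimately show "z \<in> {z\<in>Q. r z < r a}" by simp
      qed
    qed
    then have ca: "card {z\<in>Q. r z < r a} = t - 1" using cardS by simp
    show "scale t r Q = a" by (intro scale_char[OF fQ iQ _ ca]) (simp add: Q_def)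
  qed
  have L2: "c0 \<in> SS \<longrightarrow> scale t r Q = b"
  proof
    assume cS: "c0 \<in> SS"
    have "{z\<in>Q. r z < r b} = insert a (SS - {c0})"
    proof (rule set_eqI)
      fix z
      show "z \<in> {z\<in>Q. r z < r b} \<longleftrightarrow> z \<in> insert a (SS - {c0})"
      proof
        assume "z \<in> {z\<in>Q. r z < r b}"
        then have zQ: "z \<in> Q" and zr: "r z < r b" by auto
        show "z \<in> insert a (SS - {c0})"
        proof (cases "z = a")
          case False
          have "z \<noteq> b" using zr by auto
          then have "z \<in> UU - {c0}" using zQ False unfolding Q_def by auto
          moreover have "z \<notin> LL" using zr bm by (auto simp: memL)
          ultimately show ?thesis by blast
        qed simp
      next
        assume z: "z \<in> insert a (SS - {c0})"
        then have "z \<in> Q" unfolding Q_def by auto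
        moreover have "r z < r b" using z ab bm by (auto simp: memS)
        ultimately show "z \<in> {z\<in>Q. r z < r b}" by simp
      qed
    qed
    moreover have "a \<notin> SS - {c0}" using a by blast
    moreover have "finite SS" by (simp add: smallS_def)
    moreover have "card SS \<ge> 1" using cS \<open>finite SS\<close> by (metis One_nat_def Suc_leI card_gt_0_iff empty_iff)
    ultimately have cb: "card {z\<in>Q. r z < r b} = t - 1" using cS cardS by simp
    show "scale t r Q = b" by (intro scale_char[OF fQ iQ _ cb]) (simp add: Q_def)
  qed
  show ?thesis using L1 L2 by blast
qed

definition key :: "nat \<Rightarrow> nat \<Rightarrow> int" where
  "key c0 z = (if c0 \<in> SS then - int (r z) else int (r z))"

lemma cmp_ok:
  assumes x: "x \<in> MM" and y: "y \<in> MM" and xy: "x \<noteq> y" and c0: "c0 \<in> UU"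
  shows "(UU - {c0}) \<union> {x, y} \<subseteq> {..<n} \<and> card ((UU - {c0}) \<union> {x, y}) = k \<and>
    (scale t r ((UU - {c0}) \<union> {x, y}) = x \<longleftrightarrow> key c0 x < key c0 y)"
proof -
  have "(UU - {c0}) \<union> {x, y} = insert x (insert y (UU - {c0}))" by auto
  moreover have "card (insert x (insert y (UU - {c0}))) = k"
    using x y xy c0 finU cardU k2 by (simp add: card_insert_if)
  ultimately have cQ: "card ((UU - {c0}) \<union> {x, y}) = k" by simp
  have sub: "(UU - {c0}) \<union> {x, y} \<subseteq> {..<n}" using Usub x y by auto
  have rne: "r x \<noteq> r y" using inj x y xy by (meson DiffD1 inj_onD)
  have cSL: "c0 \<in> SS \<or> c0 \<in> LL" "\<not> (c0 \<in> SS \<and> c0 \<in> LL)" using c0 disjSL by auto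
  have "scale t r ((UU - {c0}) \<union> {x, y}) = x \<longleftrightarrow> key c0 x < key c0 y"
  proof (cases "r x < r y")
    case True
    show ?thesis using cmp_lt[OF x y True c0] cSL True xy unfolding key_def by auto
  next
    case False
    then have yx: "r y < r x" using rne by linarith
    have e: "(UU - {c0}) \<union> {x, y} = (UU - {c0}) \<union> {y, x}" by auto
    show ?thesis using cmp_lt[OF y x yx c0] cSL yx xy unfolding key_def e by auto
  qed
  then show ?thesis using cQ sub by blast
qed

end

definition alg :: "nat \<Rightarrow> nat \<Rightarrow> nat \<Rightarrow> (nat set \<times> nat list) comp" where
  "alg k t n = cbind (tour {..<k-1} [k-1..<n]) (\<lambda>C.
     cbind (msort (\<lambda>x y. (C - {Min C}) \<union> {x, y}) (filter (\<lambda>x. x \<notin> C) [0..<n])) (\<lambda>ms.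
       Ask (set (take k ms)) (\<lambda>q. Ret (C, if q = ms ! (t-1) then ms else rev ms))))"

context sett begin

lemma orient:
  assumes s: "sorted_wrt (\<lambda>x y. r x < r y) ys" and sub: "set ys \<subseteq> {..<n}" and d: "distinct ys"
    and i: "t - 1 < length ys"
  shows "scale t r (set ys) = ys ! (t - 1)"
proof (rule scale_char)
  show "finite (set ys)" by simp
  show "inj_on r (set ys)" using injQ[OF sub] .
  show "ys ! (t - 1) \<in> set ys" using i by simp
  have "{y \<in> set ys. r y < r (ys ! (t - 1))} = set (take (t - 1) ys)" by (rule sorted_rank[OF s i])
  then show "card {y \<in> set ys. r y < r (ys ! (t - 1))} = t - 1"
    using d i by (simp add: distinct_card)
qed

lemma sorted_take': "sorted_wrt P xs \<Longrightarrow> sorted_wrt P (take m xs)"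
  by (metis append_take_drop_id sorted_wrt_append)

lemma alg_ok:
  assumes L: "n \<le> 2 ^ L"
  shows "vld k t n r (alg k t n) \<and> cst t r (alg k t n) \<le> n + n * L + 1 \<and>
         correct_output k t n r (run t r (alg k t n))"
proof -
  have T: "run t r (tour {..<k-1} [k-1..<n]) = UU \<and> cst t r (tour {..<k-1} [k-1..<n]) = n - (k-1)
           \<and> vld k t n r (tour {..<k-1} [k-1..<n])"
    by (rule tour_ok) (use nbig cardU in auto)
  define c0 where "c0 = Min UU"
  have "card UU \<noteq> 0" using cardU k2 by simp
  then have Une: "UU \<noteq> {}" by (metis card.empty)
  have c0U: "c0 \<in> UU" unfolding c0_def using finU Une by (rule Min_in)
  define Qf where "Qf = (\<lambda>x y. (UU - {c0}) \<union> {x, y})"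
  define ms0 where "ms0 = filter (\<lambda>x. x \<notin> UU) [0..<n]"
  have sms0: "set ms0 = MM" unfolding ms0_def by auto
  have dms0: "distinct ms0" unfolding ms0_def by simp
  have injk: "inj_on (key c0) MM"
  proof (rule inj_onI)
    fix x y assume "x \<in> MM" "y \<in> MM" "key c0 x = key c0 y"
    then show "x = y" using inj unfolding key_def by (auto split: if_splits dest: inj_onD)
  qed
  have MS: "mset (run t r (msort Qf ms0)) = mset ms0 \<and>
     sorted_wrt (\<lambda>x y. key c0 x < key c0 y) (run t r (msort Qf ms0)) \<and>
     vld k t n r (msort Qf ms0) \<and>
     (\<forall>L. length ms0 \<le> 2 ^ L \<longrightarrow> cst t r (msort Qf ms0) \<le> length ms0 * L)"
  proof (rule msort_props[OF injk])
    fix x y assume "x \<in> MM" "y \<in> MM" "x \<noteq> y"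
    then show "Qf x y \<subseteq> {..<n} \<and> card (Qf x y) = k \<and> (scale t r (Qf x y) = x) = (key c0 x < key c0 y)"
      unfolding Qf_def by (rule cmp_ok[OF _ _ _ c0U])
  qed (use sms0 dms0 in auto)
  define ms where "ms = run t r (msort Qf ms0)"
  have sms: "set ms = MM" using arg_cong[OF MS[THEN conjunct1], of set_mset] sms0 unfolding ms_def by simp
  have dms: "distinct ms" using mset_eq_imp_distinct_iff[OF MS[THEN conjunct1]] dms0 unfolding ms_def by simp
  have lms0: "length ms0 = n - (k - 1)" using distinct_card[OF dms0] sms0 cardM by simp
  have lms: "length ms = n - (k - 1)" using arg_cong[OF MS[THEN conjunct1], of size] lms0 unfolding ms_def by simp
  have klen: "k \<le> length ms" using lms nbig by simp
  have msn: "set ms \<subseteq> {..<n}" using sms by auto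
  have srt: "sorted_wrt (\<lambda>x y. key c0 x < key c0 y) ms" using MS unfolding ms_def by simp
  define ys where "ys = take k ms"
  have lys: "length ys = k" using klen unfolding ys_def by simp
  have dys: "distinct ys" using dms unfolding ys_def by simp
  have ysn: "set ys \<subseteq> {..<n}" using msn set_take_subset[of k ms] unfolding ys_def by blast
  have tl: "t - 1 < length ys" using lys tk t1 by simp
  define q where "q = scale t r (set ys)"
  define F where "F = (\<lambda>ms. Ask (set (take k ms)) (\<lambda>q. Ret (UU, if q = ms ! (t-1) then ms else rev ms)))"
  have TR: "run t r (tour {..<k-1} [k-1..<n]) = UU" and TC: "cst t r (tour {..<k-1} [k-1..<n]) = n - (k-1)"
    and TV: "vld k t n r (tour {..<k-1} [k-1..<n])" using T by auto
  have e: "alg k t n = cbind (tour {..<k-1} [k-1..<n]) (\<lambda>C.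
     cbind (msort (\<lambda>x y. (C - {Min C}) \<union> {x, y}) (filter (\<lambda>x. x \<notin> C) [0..<n])) (\<lambda>ms.
       Ask (set (take k ms)) (\<lambda>q. Ret (C, if q = ms ! (t-1) then ms else rev ms))))"
    by (simp only: alg_def)
  have runalg: "run t r (alg k t n) = (UU, if q = ms ! (t-1) then ms else rev ms)"
    unfolding e run_bind TR unfolding c0_def[symmetric] Qf_def[symmetric] ms0_def[symmetric]
    unfolding run_bind ms_def[symmetric] run.simps ys_def[symmetric] q_def[symmetric] by (rule refl)
  have cstalg: "cst t r (alg k t n) = (n - (k - 1)) + cst t r (msort Qf ms0) + 1"
    unfolding e cst_bind run_bind TR TC unfolding c0_def[symmetric] Qf_def[symmetric] ms0_def[symmetric]
    unfolding cst_bind ms_def[symmetric] cst.simps by simp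
  have vldalg: "vld k t n r (alg k t n) = (vld k t n r (msort Qf ms0) \<and> set ys \<subseteq> {..<n} \<and> card (set ys) = k)"
    unfolding e vld_bind run_bind TR unfolding c0_def[symmetric] Qf_def[symmetric] ms0_def[symmetric]
    unfolding vld_bind ms_def[symmetric] vld.simps ys_def[symmetric] using TV by simp
  have V: "vld k t n r (alg k t n)"
    unfolding vldalg using MS ysn lys dys by (simp add: distinct_card)
  have "length ms0 \<le> 2 ^ L" using lms0 L by simp
  then have "cst t r (msort Qf ms0) \<le> length ms0 * L" using MS by blast
  also have "\<dots> \<le> n * L" using lms0 by simp
  finally have C: "cst t r (alg k t n) \<le> n + n * L + 1" unfolding cstalg by simp
  have O: "correct_output k t n r (UU, if q = ms ! (t-1) then ms else rev ms)"
  proof (cases "c0 \<in> SS")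
    case False
    have inc: "sorted_wrt (\<lambda>x y. r x < r y) ms"
      by (rule sorted_wrt_mono_rel[OF _ srt]) (use False in \<open>simp add: key_def\<close>)
    have "q = ys ! (t - 1)" unfolding q_def
      by (rule orient[OF _ ysn dys tl]) (use inc in \<open>simp add: ys_def sorted_take'\<close>)
    then have "q = ms ! (t - 1)" using tl unfolding ys_def by simp
    then show ?thesis unfolding correct_output_def using sms inc by simp
  next
    case True
    have dec: "sorted_wrt (\<lambda>x y. r y < r x) ms"
      by (rule sorted_wrt_mono_rel[OF _ srt]) (use True in \<open>simp add: key_def\<close>)
    have decys: "sorted_wrt (\<lambda>x y. r y < r x) ys" unfolding ys_def using dec by (rule sorted_take')
    have incr: "sorted_wrt (\<lambda>x y. r x < r y) (rev ys)" using decys by (simp add: sorted_wrt_rev)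
    have "q = rev ys ! (t - 1)" unfolding q_def
      using orient[OF incr] ysn dys tl by simp
    also have "\<dots> = ys ! (k - t)" using tl lys t1 by (simp add: rev_nth)
    also have "\<dots> = ms ! (k - t)" using tk t1 unfolding ys_def by simp
    finally have q: "q = ms ! (k - t)" .
    show ?thesis
    proof (cases "q = ms ! (t - 1)")
      case True
      then have "ms ! (k - t) = ms ! (t - 1)" using q by simp
      then have "k - t = t - 1" using nth_eq_iff_index_eq[OF dms] klen tk t1 by simp
      then have "2 * t = k + 1" using tk t1 by simp
      then show ?thesis unfolding correct_output_def using sms dec True by simp
    next
      case False
      have "sorted_wrt (\<lambda>x y. r x < r y) (rev ms)" using dec by (simp add: sorted_wrt_rev)
      then show ?thesis unfolding correct_output_def using sms False by simp
    qed
  qed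
  show ?thesis using V C O runalg by simp
qed

end



lemma log_bound:
  fixes n :: nat
  assumes n3: "3 \<le> n"
  shows "\<exists>L. n \<le> 2 ^ L \<and> real n + real n * real L + 1 \<le> 5 * real n * ln (real n)"
proof -
  have rn: "3 \<le> real n" using n3 by simp
  have lnn: "1 \<le> ln (real n)"
  proof -
    have "exp 1 \<le> real n" using exp_le rn by linarith
    then have "ln (exp 1) \<le> ln (real n)" using rn by (subst ln_le_cancel_iff) auto
    then show ?thesis by simp
  qed
  have l4: "1 \<le> ln (4::real)"
  proof -
    have "exp 1 \<le> (4::real)" using exp_le by linarith
    then have "ln (exp 1) \<le> ln (4::real)" by (subst ln_le_cancel_iff) auto
    then show ?thesis by simp
  qed
  have "ln (4::real) = ln (2 ^ 2)" by simp
  also have "\<dots> = 2 * ln 2" by (subst ln_realpow) auto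
  finally have l2: "1/2 \<le> ln (2::real)" using l4 by simp
  have l2p: "0 < ln (2::real)" by simp
  have lg: "log 2 (real n) \<le> 2 * ln (real n)"
  proof -
    have "log 2 (real n) = ln (real n) / ln 2" by (simp add: log_def)
    also have "\<dots> \<le> ln (real n) / (1/2)"
      using l2 lnn by (intro divide_left_mono) auto
    finally show ?thesis by simp
  qed
  define L where "L = nat \<lceil>2 * ln (real n)\<rceil>"
  have L1: "2 * ln (real n) \<le> real L" unfolding L_def by linarith
  have L2: "real L \<le> 2 * ln (real n) + 1" unfolding L_def using lnn by linarith
  have "real n = 2 powr log 2 (real n)" using rn by simp
  also have "\<dots> \<le> 2 powr real L" using lg L1 by (intro powr_mono) auto
  also have "\<dots> = 2 ^ L" by (simp add: powr_realpow)
  finally have "real n \<le> real (2 ^ L)" by simp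
  then have nL: "n \<le> 2 ^ L" by (simp only: of_nat_le_iff)
  have a: "real n * real L \<le> real n * (2 * ln (real n) + 1)" using L2 by (intro mult_left_mono) auto
  have b: "real n \<le> real n * ln (real n)" using lnn rn by (metis mult_left_mono mult.right_neutral of_nat_0_le_iff)
  have "real n + real n * real L + 1 \<le> 2 * real n * ln (real n) + 2 * real n + 1"
    using a by (simp add: algebra_simps)
  also have "\<dots> \<le> 5 * real n * ln (real n)" using b rn by linarith
  finally show ?thesis using nL by blast
qed



theorem mainTheorem1:
  fixes k t :: nat
  assumes "2 \<le> k" and "1 \<le> t" and "t \<le> k"
  shows "\<exists>C::real. \<forall>\<^sub>F n in sequentially. \<exists>T::qtree.
           \<forall>r. bij_betw r {..<n} {..<n} \<longrightarrow>
               valid_run k t n T r \<and>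
               real (cost t T r) \<le> C * real n * ln (real n) \<and>
               correct_output k t n r (result t T r)"
proof (intro exI[of _ 5])
  have ev: "\<forall>\<^sub>F n in sequentially. 2*k+3 \<le> n" by (rule eventually_ge_at_top)
  show "\<forall>\<^sub>F n in sequentially. \<exists>T::qtree.
           \<forall>r. bij_betw r {..<n} {..<n} \<longrightarrow>
               valid_run k t n T r \<and>
               real (cost t T r) \<le> 5 * real n * ln (real n) \<and>
               correct_output k t n r (result t T r)"
    using ev
  proof (rule eventually_mono)
    fix n assume nb: "2*k+3 \<le> n"
    then have n3: "3 \<le> n" by simp
    obtain L where nL: "n \<le> 2 ^ L" and LB: "real n + real n * real L + 1 \<le> 5 * real n * ln (real n)"
      using log_bound[OF n3] by blast
    show "\<exists>T::qtree. \<forall>r. bij_betw r {..<n} {..<n} \<longrightarrow>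
               valid_run k t n T r \<and>
               real (cost t T r) \<le> 5 * real n * ln (real n) \<and>
               correct_output k t n r (result t T r)"
    proof (intro exI[of _ "toq (alg k t n)"] allI impI)
      fix r assume b: "bij_betw r {..<n} {..<n}"
      interpret sett k t n r using assms b nb by unfold_locales auto
      have A: "vld k t n r (alg k t n) \<and> cst t r (alg k t n) \<le> n + n * L + 1 \<and>
         correct_output k t n r (run t r (alg k t n))" by (rule alg_ok[OF nL])
      have "real (cst t r (alg k t n)) \<le> real (n + n * L + 1)" using A by (simp only: of_nat_le_iff)
      then have "real (cst t r (alg k t n)) \<le> 5 * real n * ln (real n)" using LB by simp
      then show "valid_run k t n (toq (alg k t n)) r \<and>
               real (cost t (toq (alg k t n)) r) \<le> 5 * real n * ln (real n) \<and>
               correct_output k t n r (result t (toq (alg k t n)) r)"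
        using A by (simp add: toq_valid toq_cost toq_result)
    qed
  qed
qed

end
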